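(* Let $f(w)=w^2$ on $\mathbb CP^1$, so $f^*\mathsf m$ has two antipodal conical points of angle $4\pi$ at $w=0$ and $w=\infty$, and let $(r,\varphi)$ be coordinates with $\varphi=2\arg w\in[0,4\pi)$ and $\cot(r/2)=|w|^2$, $r\in[0,\pi]$. For $\lambda=\nu(\nu+1)$ not in the spectrum, the function $$Y(\lambda)=\frac1w\Big(\frac{\cos(\nu r)}{\cos(\nu\pi)}+\frac{\sin(\nu r)}{\cos(\nu\pi)}|w|^2\Big)$$ lies in $L^2$, satisfies $(\Delta^*-\lambda)Y=0$, is bounded near $w=\infty$, and as $w\to0$ has the expansion $Y=w^{-1}+c(\lambda)+a(\lambda)\bar w+b(\lambda)w+O(|w|^{2-\epsilon})$ with $b(\lambda)\equiv0$, $c(\lambda)\equiv0$ and $a(\lambda)=(1+2\nu)\tan(\nu\pi)$.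
   Context: $\mathsf m=\frac{4|dz|^2}{(1+|z|^2)^2}$ on $\mathbb CP^1$; $\Delta^*$ is the positive Laplace–Beltrami operator of $f^*\mathsf m$, which in the coordinates $(r,\varphi)$ reads $\Delta^*=-\partial_r^2-\cot r\,\partial_r-(\sin r)^{-2}\partial_\varphi^2$. Here $w$ coincides with the distinguished parameter $x=\sqrt{z-0}$ at the critical point $w=0$. *)

theory Defs
  imports "HOL-Analysis.Analysis"
begin

definition rcoord :: "complex \<Rightarrow> real" where
  "rcoord w = (if w = 0 then pi else 2 * arctan (1 / (cmod w)^2))"

definition Yfun :: "complex \<Rightarrow> complex \<Rightarrow> complex" where
  "Yfun \<nu> w = (1 / w) * (cos (\<nu> * of_real (rcoord w)) / cos (\<nu> * of_real pi)
      + sin (\<nu> * of_real (rcoord w)) / cos (\<nu> * of_real pi) * of_real ((cmod w)^2))"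

definition w_of_polar :: "real \<Rightarrow> real \<Rightarrow> complex" where
  "w_of_polar r \<phi> = of_real (sqrt (cot (r / 2))) * cis (\<phi> / 2)"

definition Ypolar :: "complex \<Rightarrow> real \<Rightarrow> real \<Rightarrow> complex" where
  "Ypolar \<nu> r \<phi> = Yfun \<nu> (w_of_polar r \<phi>)"

text \<open>Area density of the pulled back metric f^* m, f(w) = w^2, w.r.t. Lebesgue measure in w:
  4 |f'(w)|^2 / (1 + |f(w)|^2)^2.\<close>
definition area_density :: "complex \<Rightarrow> real" where
  "area_density w = 4 * (cmod (2 * w))^2 / (1 + (cmod (w^2))^2)^2"

definition pd_r :: "(real \<Rightarrow> real \<Rightarrow> complex) \<Rightarrow> real \<Rightarrow> real \<Rightarrow> complex" where
  "pd_r F r \<phi> = vector_derivative (\<lambda>s. F s \<phi>) (at r)"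

definition pd_phi :: "(real \<Rightarrow> real \<Rightarrow> complex) \<Rightarrow> real \<Rightarrow> real \<Rightarrow> complex" where
  "pd_phi F r \<phi> = vector_derivative (\<lambda>t. F r t) (at \<phi>)"

definition polar_C2_at :: "(real \<Rightarrow> real \<Rightarrow> complex) \<Rightarrow> real \<Rightarrow> real \<Rightarrow> bool" where
  "polar_C2_at F r \<phi> \<longleftrightarrow>
     (\<forall>s\<in>{0<..<pi}. (\<lambda>s'. F s' \<phi>) differentiable (at s)) \<and> (\<lambda>s. pd_r F s \<phi>) differentiable (at r) \<and>
     (\<forall>t. (\<lambda>t'. F r t') differentiable (at t)) \<and> (\<lambda>t. pd_phi F r t) differentiable (at \<phi>)"

definition Lap_star :: "(real \<Rightarrow> real \<Rightarrow> complex) \<Rightarrow> real \<Rightarrow> real \<Rightarrow> complex" where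
  "Lap_star F r \<phi> = - pd_r (pd_r F) r \<phi> - of_real (cot r) * pd_r F r \<phi>
     - of_real (1 / (sin r)^2) * pd_phi (pd_phi F) r \<phi>"

end

theory Submission
  imports Defs "HOL-Probability.Sinc_Integral"
begin


definition U :: "real \<Rightarrow> real" where "U s = sqrt (tan (s/2))"

lemma U_pos: "s \<in> {0<..<pi} \<Longrightarrow> U s > 0"
  unfolding U_def by (auto intro!: tan_gt_zero)

lemma U_deriv:
  assumes "s \<in> {0<..<pi}"
  shows "(U has_real_derivative (1 + U s ^ 4) / (4 * U s)) (at s)"
proof -
  have c: "cos (s/2) > 0" using assms by (auto intro!: cos_gt_zero_pi)
  have t: "tan (s/2) > 0" using assms by (auto intro!: tan_gt_zero)
  have "((\<lambda>s. sqrt (tan (s/2))) has_real_derivative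
      inverse (sqrt (tan (s/2))) / 2 * (inverse (cos (s/2) ^ 2) * (1/2))) (at s)"
    using c t by (auto intro!: derivative_eq_intros DERIV_tan[THEN DERIV_chain2])
  moreover have "inverse (sqrt (tan (s/2))) / 2 * (inverse (cos (s/2) ^ 2) * (1/2))
      = (1 + U s ^ 4) / (4 * U s)"
  proof -
    have u4: "U s ^ 4 = tan (s/2) ^ 2" unfolding U_def using t
      by (metis power2_eq_square power_mult real_sqrt_pow2 less_imp_le numeral_Bit0 mult_2_right)
    have "1 + tan (s/2) ^ 2 = inverse (cos (s/2) ^ 2)"
      using c by (simp add: tan_def field_simps sin_squared_eq)
    then show ?thesis using u4 unfolding U_def by (simp add: field_simps)
  qed
  moreover have "U = (\<lambda>s. sqrt (tan (s/2)))" unfolding U_def by auto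
  ultimately show ?thesis by metis
qed

lemma dA: fixes \<nu> :: complex shows "((\<lambda>s. cos (\<nu> * of_real s)) has_vector_derivative (- \<nu> * sin (\<nu> * of_real s))) (at s)"
proof -
  have "((\<lambda>z. cos (\<nu> * z)) has_field_derivative (- \<nu> * sin (\<nu> * of_real s))) (at (of_real s))"
    by (auto intro!: derivative_eq_intros)
  from has_vector_derivative_real_field[OF this] show ?thesis by simp
qed

lemma dB: fixes \<nu> :: complex shows "((\<lambda>s. sin (\<nu> * of_real s)) has_vector_derivative (\<nu> * cos (\<nu> * of_real s))) (at s)"
proof -
  have "((\<lambda>z. sin (\<nu> * z)) has_field_derivative (\<nu> * cos (\<nu> * of_real s))) (at (of_real s))"
    by (auto intro!: derivative_eq_intros)
  from has_vector_derivative_real_field[OF this] show ?thesis by simp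
qed

definition g :: "complex \<Rightarrow> real \<Rightarrow> complex" where
  "g \<nu> s = cos (\<nu> * of_real s) * of_real (U s) + sin (\<nu> * of_real s) * of_real (1 / U s)"

definition g1 :: "complex \<Rightarrow> real \<Rightarrow> complex" where
  "g1 \<nu> s = cos (\<nu> * of_real s) * of_real ((1 + U s ^ 4) / (4 * U s))
     + \<nu> * cos (\<nu> * of_real s) * of_real (1 / U s)
     - \<nu> * sin (\<nu> * of_real s) * of_real (U s)
     - sin (\<nu> * of_real s) * of_real ((1 + U s ^ 4) / (4 * U s ^ 3))"

definition G2 :: "complex \<Rightarrow> complex \<Rightarrow> complex \<Rightarrow> complex \<Rightarrow> complex" where
  "G2 \<nu> A B v = -\<nu>*(\<nu>*A* v + B*((1 + v^4) / (4* v))) + (-\<nu>*B*((1 + v^4) / (4* v)) + A*((3* v^2/4 - 1/(4* v^2))*((1 + v^4) / (4* v))))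
     + \<nu>*(-\<nu>*B/v - A*((1 + v^4) / (4* v))/v^2)
     - (\<nu>*A*((1+v^4)/(4* v^3)) + B*((1/4 - 3/(4* v^4))*((1 + v^4) / (4* v))))"

definition g2 :: "complex \<Rightarrow> real \<Rightarrow> complex" where
  "g2 \<nu> s = G2 \<nu> (cos (\<nu> * of_real s)) (sin (\<nu> * of_real s)) (complex_of_real (U s))"

lemma g_deriv: assumes "s \<in> {0<..<pi}"
  shows "(g \<nu> has_vector_derivative g1 \<nu> s) (at s)"
proof -
  have u: "U s > 0" using U_pos[OF assms] .
  note ud = U_deriv[OF assms]
  have dv: "((\<lambda>s. complex_of_real (U s)) has_vector_derivative of_real ((1 + U s ^ 4) / (4 * U s))) (at s)"
    by (rule has_vector_derivative_of_real[OF ud])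
  have "((\<lambda>s. 1 / U s) has_real_derivative (- ((1 + U s ^ 4) / (4 * U s)) / (U s)^2)) (at s)"
    using u by (auto intro!: derivative_eq_intros ud simp: field_simps power2_eq_square)
  then have dv': "((\<lambda>s. complex_of_real (1 / U s)) has_vector_derivative of_real (- ((1 + U s ^ 4) / (4 * U s)) / (U s)^2)) (at s)"
    by (rule has_vector_derivative_of_real)
  have "(g \<nu> has_vector_derivative
     (cos (\<nu> * of_real s) * of_real ((1 + U s ^ 4) / (4 * U s)) + (- \<nu> * sin (\<nu> * of_real s)) * of_real (U s))
   + (sin (\<nu> * of_real s) * of_real (- ((1 + U s ^ 4) / (4 * U s)) / (U s)^2) + (\<nu> * cos (\<nu> * of_real s)) * of_real (1 / U s))) (at s)"
    unfolding g_def[abs_def]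
    by (intro has_vector_derivative_add has_vector_derivative_mult dA dB dv dv')
  moreover have "(cos (\<nu> * of_real s) * of_real ((1 + U s ^ 4) / (4 * U s)) + (- \<nu> * sin (\<nu> * of_real s)) * of_real (U s))
   + (sin (\<nu> * of_real s) * of_real (- ((1 + U s ^ 4) / (4 * U s)) / (U s)^2) + (\<nu> * cos (\<nu> * of_real s)) * of_real (1 / U s)) = g1 \<nu> s"
    unfolding g1_def using u apply (simp add: field_simps) by algebra
  ultimately show ?thesis by simp
qed

lemma g1_deriv: assumes "s \<in> {0<..<pi}"
  shows "(g1 \<nu> has_vector_derivative g2 \<nu> s) (at s)"
proof -
  have u: "U s > 0" using U_pos[OF assms] .
  note ud = U_deriv[OF assms]
  define V where "V = (1 + U s ^ 4) / (4 * U s)"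
  have dv: "((\<lambda>s. complex_of_real (U s)) has_vector_derivative of_real V) (at s)"
    unfolding V_def by (rule has_vector_derivative_of_real[OF ud])
  have "((\<lambda>s. 1 / U s) has_real_derivative (- V / (U s)^2)) (at s)"
    using u unfolding V_def by (auto intro!: derivative_eq_intros ud simp: field_simps power2_eq_square)
  then have dv': "((\<lambda>s. complex_of_real (1 / U s)) has_vector_derivative of_real (- V / (U s)^2)) (at s)"
    by (rule has_vector_derivative_of_real)
  have "((\<lambda>s. (1 + U s ^ 4) / (4 * U s)) has_real_derivative ((3*(U s)^2/4 - 1/(4*(U s)^2))*V)) (at s)"
    using u unfolding V_def by (auto intro!: derivative_eq_intros ud simp: field_simps power2_eq_square) algebra
  then have dP: "((\<lambda>s. complex_of_real ((1 + U s ^ 4) / (4 * U s))) has_vector_derivative of_real ((3*(U s)^2/4 - 1/(4*(U s)^2))*V)) (at s)"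
    by (rule has_vector_derivative_of_real)
  have "((\<lambda>s. (1 + U s ^ 4) / (4 * U s ^ 3)) has_real_derivative ((1/4 - 3/(4*(U s)^4))*V)) (at s)"
    using u unfolding V_def by (auto intro!: derivative_eq_intros ud simp: field_simps power2_eq_square) (algebra)
  then have dQ: "((\<lambda>s. complex_of_real ((1 + U s ^ 4) / (4 * U s ^ 3))) has_vector_derivative of_real ((1/4 - 3/(4*(U s)^4))*V)) (at s)"
    by (rule has_vector_derivative_of_real)
  have "(g1 \<nu> has_vector_derivative
     (cos (\<nu> * of_real s) * of_real ((3*(U s)^2/4 - 1/(4*(U s)^2))*V) + (- \<nu> * sin (\<nu> * of_real s)) * of_real ((1 + U s ^ 4) / (4 * U s)))
   + ((\<nu> * cos (\<nu> * of_real s)) * of_real (- V / (U s)^2) + (\<nu> * (- \<nu> * sin (\<nu> * of_real s))) * of_real (1 / U s))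
   - ((\<nu> * sin (\<nu> * of_real s)) * of_real V + (\<nu> * (\<nu> * cos (\<nu> * of_real s))) * of_real (U s))
   - (sin (\<nu> * of_real s) * of_real ((1/4 - 3/(4*(U s)^4))*V) + (\<nu> * cos (\<nu> * of_real s)) * of_real ((1 + U s ^ 4) / (4 * U s ^ 3)))) (at s)"
    unfolding g1_def[abs_def]
    by (intro has_vector_derivative_add has_vector_derivative_diff has_vector_derivative_mult
        has_vector_derivative_mult_right dA dB dv dv' dP dQ)
  moreover have "(cos (\<nu> * of_real s) * of_real ((3*(U s)^2/4 - 1/(4*(U s)^2))*V) + (- \<nu> * sin (\<nu> * of_real s)) * of_real ((1 + U s ^ 4) / (4 * U s)))
   + ((\<nu> * cos (\<nu> * of_real s)) * of_real (- V / (U s)^2) + (\<nu> * (- \<nu> * sin (\<nu> * of_real s))) * of_real (1 / U s))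
   - ((\<nu> * sin (\<nu> * of_real s)) * of_real V + (\<nu> * (\<nu> * cos (\<nu> * of_real s))) * of_real (U s))
   - (sin (\<nu> * of_real s) * of_real ((1/4 - 3/(4*(U s)^4))*V) + (\<nu> * cos (\<nu> * of_real s)) * of_real ((1 + U s ^ 4) / (4 * U s ^ 3))) = g2 \<nu> s"
    unfolding g2_def G2_def V_def using u by (simp add: field_simps)
  ultimately show ?thesis by simp
qed

lemma ode_alg:
  fixes \<nu> A B v :: complex
  assumes "v \<noteq> 0"
  shows "- G2 \<nu> A B v - ((1 - v^4) / (2 * v^2)) * (A * ((1 + v^4) / (4 * v)) + \<nu> * A * (1 / v) - \<nu> * B * v - B * ((1 + v^4) / (4 * v^3)))
     + ((1 + v^4)^2 / (4 * v^4)) / 4 * (A * v + B * (1 / v)) - \<nu> * (\<nu> + 1) * (A * v + B * (1 / v)) = 0"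
  unfolding G2_def using assms apply (simp add: field_simps) by algebra

definition E :: "real \<Rightarrow> complex" where "E t = exp (- (\<i>/2) * of_real t)"

lemma E_deriv: "(E has_vector_derivative (- (\<i>/2) * E t)) (at t)"
proof -
  have "((\<lambda>z. exp (- (\<i>/2) * z)) has_field_derivative (- (\<i>/2) * E t)) (at (of_real t))"
    unfolding E_def by (auto intro!: derivative_eq_intros)
  from has_vector_derivative_real_field[OF this] show ?thesis unfolding E_def[abs_def] by simp
qed

lemma Ypolar_eq:
  assumes "s \<in> {0<..<pi}"
  shows "Ypolar \<nu> s t = E t * g \<nu> s / cos (\<nu> * of_real pi)"
proof -
  have u: "U s > 0" using U_pos[OF assms] .
  have x: "0 < s/2" "s/2 < pi/2" using assms by auto
  have tpos: "tan (s/2) > 0" using x by (intro tan_gt_zero) auto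
  have cot: "cot (s/2) = 1 / (U s)^2" unfolding U_def using tpos
    by (simp add: cot_def tan_def)
  have sq: "sqrt (cot (s/2)) = 1 / U s" using u cot by (simp add: real_sqrt_divide)
  define w where "w = w_of_polar s t"
  have w: "w = of_real (1 / U s) * cis (t/2)" unfolding w_def w_of_polar_def sq ..
  have w0: "w \<noteq> 0" using u w by simp
  have cm: "cmod w = 1 / U s" using u w by (simp add: norm_divide)
  have rc: "rcoord w = s"
  proof -
    have "1 / (cmod w)^2 = tan (s/2)" using cm u unfolding U_def using tpos by (simp add: power_divide)
    then show ?thesis unfolding rcoord_def using w0 x arctan_tan[of "s/2"] by simp
  qed
  have iw: "1 / w = of_real (U s) * E t" unfolding w E_def using u
    by (simp add: cis_conv_exp field_simps exp_minus exp_of_real flip: exp_add)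
  show ?thesis unfolding Ypolar_def w_def[symmetric] Yfun_def rc iw g_def cm using u
    by (cases "cos (\<nu> * of_real pi) = 0") (simp_all add: field_simps power2_eq_square)
qed

lemma trig_U:
  assumes "r \<in> {0<..<pi}"
  shows "cot r = (1 - U r ^ 4) / (2 * U r ^ 2)" "1 / (sin r)^2 = (1 + U r ^ 4)^2 / (4 * U r ^ 4)"
proof -
  have x: "0 < r/2" "r/2 < pi/2" using assms by auto
  have c: "cos (r/2) > 0" using x by (intro cos_gt_zero_pi) auto
  have sn: "sin (r/2) > 0" using x by (intro sin_gt_zero) auto
  have tpos: "tan (r/2) > 0" using x by (intro tan_gt_zero) auto
  have u2: "U r ^ 2 = sin (r/2) / cos (r/2)" unfolding U_def using tpos by (simp add: tan_def)
  have u4: "U r ^ 4 = (sin (r/2) / cos (r/2))^2" using u2 by (metis power_mult numeral_times_numeral semiring_norm(12) semiring_norm(13) mult_2 numeral_Bit0 power_add)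
  have r: "r = 2 * (r/2)" by simp
  have sr: "sin r = 2 * sin (r/2) * cos (r/2)" by (subst r, rule sin_double)
  have cr: "cos r = cos (r/2)^2 - sin (r/2)^2" by (subst r, rule cos_double)
  have one: "sin (r/2)^2 + cos (r/2)^2 = 1" by simp
  show "cot r = (1 - U r ^ 4) / (2 * U r ^ 2)" unfolding cot_def sr cr u2 u4 using c sn
    by (simp add: field_simps power2_eq_square)
  show "1 / (sin r)^2 = (1 + U r ^ 4)^2 / (4 * U r ^ 4)" unfolding sr u4 using c sn
    by (simp add: field_simps power2_eq_square)
qed

lemma pde:
  fixes \<nu> :: complex
  assumes r: "r \<in> {0<..<pi}"
  shows "polar_C2_at (Ypolar \<nu>) r \<phi> \<and>
           Lap_star (Ypolar \<nu>) r \<phi> - \<nu> * (\<nu> + 1) * Ypolar \<nu> r \<phi> = 0"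
proof -
  define K where "K = cos (\<nu> * of_real pi)"
  define F where "F = Ypolar \<nu>"
  have hphi: "(\<lambda>t'. F r t') = (\<lambda>t'. E t' * g \<nu> r / K)"
    using Ypolar_eq[OF r] unfolding F_def K_def by auto
  have dphi: "((\<lambda>t'. F r t') has_vector_derivative (- (\<i>/2) * E t) * g \<nu> r / K) (at t)" for t
    unfolding hphi by (intro has_vector_derivative_divide has_vector_derivative_mult_left E_deriv)
  have pdphi: "pd_phi F r t = (- (\<i>/2) * E t) * g \<nu> r / K" for t
    unfolding pd_phi_def by (rule vector_derivative_at[OF dphi])
  have hphi2: "(\<lambda>t. pd_phi F r t) = (\<lambda>t. (- (\<i>/2)) * E t * (g \<nu> r / K))"
    using pdphi by (auto simp: field_simps)
  have dphi2: "((\<lambda>t. pd_phi F r t) has_vector_derivative (- (\<i>/2)) * (- (\<i>/2) * E \<phi>) * (g \<nu> r / K)) (at \<phi>)"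
    unfolding hphi2 by (intro has_vector_derivative_mult_left has_vector_derivative_mult_right E_deriv)
  have pdphi2: "pd_phi (pd_phi F) r \<phi> = (- (\<i>/2)) * (- (\<i>/2) * E \<phi>) * (g \<nu> r / K)"
    unfolding pd_phi_def[of "pd_phi F"] by (rule vector_derivative_at[OF dphi2])
  have dr: "((\<lambda>s'. F s' \<phi>) has_vector_derivative E \<phi> * g1 \<nu> s / K) (at s)" if s: "s \<in> {0<..<pi}" for s
  proof (rule has_vector_derivative_transform_within_open[OF _ open_greaterThanLessThan s])
    show "((\<lambda>s'. E \<phi> * g \<nu> s' / K) has_vector_derivative E \<phi> * g1 \<nu> s / K) (at s)"
      by (intro has_vector_derivative_divide has_vector_derivative_mult_right g_deriv s)
    show "\<And>y. y \<in> {0<..<pi} \<Longrightarrow> E \<phi> * g \<nu> y / K = F y \<phi>"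
      using Ypolar_eq unfolding F_def K_def by auto
  qed
  have pdr: "pd_r F s \<phi> = E \<phi> * g1 \<nu> s / K" if s: "s \<in> {0<..<pi}" for s
    unfolding pd_r_def by (rule vector_derivative_at[OF dr[OF s]])
  have drr: "((\<lambda>s. pd_r F s \<phi>) has_vector_derivative E \<phi> * g2 \<nu> r / K) (at r)"
  proof (rule has_vector_derivative_transform_within_open[OF _ open_greaterThanLessThan r])
    show "((\<lambda>s'. E \<phi> * g1 \<nu> s' / K) has_vector_derivative E \<phi> * g2 \<nu> r / K) (at r)"
      by (intro has_vector_derivative_divide has_vector_derivative_mult_right g1_deriv r)
    show "\<And>y. y \<in> {0<..<pi} \<Longrightarrow> E \<phi> * g1 \<nu> y / K = pd_r F y \<phi>"
      using pdr by auto
  qed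
  have pdrr: "pd_r (pd_r F) r \<phi> = E \<phi> * g2 \<nu> r / K"
    unfolding pd_r_def[of "pd_r F"] by (rule vector_derivative_at[OF drr])
  have C2: "polar_C2_at F r \<phi>"
    unfolding polar_C2_at_def
    using dr drr dphi dphi2 by (blast intro: differentiableI_vector)
  define v where "v = complex_of_real (U r)"
  define A where "A = cos (\<nu> * of_real r)"
  define B where "B = sin (\<nu> * of_real r)"
  have u: "U r > 0" using U_pos[OF r] .
  have v0: "v \<noteq> 0" using u unfolding v_def by simp
  have eg: "g \<nu> r = A * v + B * (1 / v)" unfolding g_def A_def B_def v_def by simp
  have eg1: "g1 \<nu> r = A * ((1 + v^4) / (4 * v)) + \<nu> * A * (1 / v) - \<nu> * B * v - B * ((1 + v^4) / (4 * v^3))"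
    unfolding g1_def A_def B_def v_def by simp
  have eg2: "g2 \<nu> r = G2 \<nu> A B v" unfolding g2_def A_def B_def v_def ..
  have ecot: "complex_of_real (cot r) = (1 - v^4) / (2 * v^2)" unfolding trig_U(1)[OF r] v_def by simp
  have esin: "complex_of_real (1 / (sin r)^2) = (1 + v^4)^2 / (4 * v^4)"
    unfolding trig_U(2)[OF r] v_def by simp
  have Y: "F r \<phi> = E \<phi> * g \<nu> r / K" using Ypolar_eq[OF r] unfolding F_def K_def by simp
  have "Lap_star F r \<phi> - \<nu> * (\<nu> + 1) * F r \<phi> =
     E \<phi> / K * (- G2 \<nu> A B v - ((1 - v^4) / (2 * v^2)) * (A * ((1 + v^4) / (4 * v)) + \<nu> * A * (1 / v) - \<nu> * B * v - B * ((1 + v^4) / (4 * v^3)))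
     + ((1 + v^4)^2 / (4 * v^4)) / 4 * (A * v + B * (1 / v)) - \<nu> * (\<nu> + 1) * (A * v + B * (1 / v)))"
    unfolding Lap_star_def pdrr pdr[OF r] pdphi2 ecot esin Y eg eg1 eg2
    using v0 apply (cases "K = 0") apply simp by (simp add: field_simps)
  also have "\<dots> = 0" using ode_alg[OF v0] by simp
  finally show ?thesis using C2 unfolding F_def by simp
qed



lemma rcoord_ge: "0 \<le> rcoord w"
  unfolding rcoord_def by auto

lemma rcoord_le: "rcoord w \<le> pi"
  unfolding rcoord_def using arctan_ubound[of "1 / (cmod w)^2"] by auto

lemma rcoord_mult: "w \<noteq> 0 \<Longrightarrow> rcoord w * (cmod w)^2 \<le> 2"
proof -
  assume w: "w \<noteq> 0"
  then have p: "(cmod w)^2 > 0" by simp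
  have "arctan (1 / (cmod w)^2) \<le> 1 / (cmod w)^2" by (rule arctan_le_self) (use p in simp)
  then have "2 * arctan (1 / (cmod w)^2) * (cmod w)^2 \<le> 2 * (1 / (cmod w)^2) * (cmod w)^2"
    using p by (intro mult_right_mono) auto
  then show ?thesis unfolding rcoord_def using w p by simp
qed

lemma cos_bound: fixes \<nu> :: complex assumes "0 \<le> r" "r \<le> pi"
  shows "cmod (cos (\<nu> * of_real r)) \<le> 1 + exp (cmod \<nu> * pi) * (cmod \<nu> * pi)"
proof -
  define z where "z = \<nu> * of_real r"
  have zn: "cmod z \<le> cmod \<nu> * pi" unfolding z_def norm_mult using assms by (intro mult_left_mono) auto
  have im: "\<bar>Im z\<bar> \<le> cmod \<nu> * pi" using abs_Im_le_cmod[of z] zn by linarith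
  have "cmod (cos z - 1) \<le> exp \<bar>Im z\<bar> * cmod z"
    using Taylor_cos[of z 0] by (simp add: cos_coeff_def)
  also have "\<dots> \<le> exp (cmod \<nu> * pi) * (cmod \<nu> * pi)"
    using im zn by (intro mult_mono) auto
  finally have "cmod (cos z - 1) \<le> exp (cmod \<nu> * pi) * (cmod \<nu> * pi)" .
  then show ?thesis unfolding z_def[symmetric] using norm_triangle_ineq2[of "cos z" 1] by simp
qed

lemma sin_bound: fixes \<nu> :: complex assumes "0 \<le> r" "r \<le> pi"
  shows "cmod (sin (\<nu> * of_real r)) \<le> exp (cmod \<nu> * pi) * (cmod \<nu> * r)"
proof -
  define z where "z = \<nu> * of_real r"
  have zn: "cmod z = cmod \<nu> * r" unfolding z_def norm_mult using assms by simp
  have zn': "cmod z \<le> cmod \<nu> * pi" unfolding zn using assms by (intro mult_left_mono) auto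
  have im: "\<bar>Im z\<bar> \<le> cmod \<nu> * pi" using abs_Im_le_cmod[of z] zn' by linarith
  have "cmod (sin z) \<le> exp \<bar>Im z\<bar> * cmod z"
    using Taylor_sin[of z 0] by (simp add: sin_coeff_def)
  also have "\<dots> \<le> exp (cmod \<nu> * pi) * (cmod \<nu> * r)"
    unfolding zn using im assms by (intro mult_right_mono) auto
  finally show ?thesis unfolding z_def .
qed

definition BY :: "complex \<Rightarrow> real" where
  "BY \<nu> = (1 + exp (cmod \<nu> * pi) * (cmod \<nu> * pi) + exp (cmod \<nu> * pi) * (cmod \<nu> * 2)) / cmod (cos (\<nu> * of_real pi))"

lemma Y_bound:
  fixes \<nu> :: complex
  assumes K: "cos (\<nu> * of_real pi) \<noteq> 0" and w: "w \<noteq> 0"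
  shows "cmod (Yfun \<nu> w) * cmod w \<le> BY \<nu>"
proof -
  define r where "r = rcoord w"
  define M where "M = exp (cmod \<nu> * pi)"
  define K where "K = cos (\<nu> * of_real pi)"
  have r0: "0 \<le> r" "r \<le> pi" unfolding r_def by (rule rcoord_ge, rule rcoord_le)
  have rm: "r * (cmod w)^2 \<le> 2" unfolding r_def by (rule rcoord_mult[OF w])
  have Kp: "cmod K > 0" using K unfolding K_def by simp
  have c: "cmod (cos (\<nu> * of_real r)) \<le> 1 + M * (cmod \<nu> * pi)" unfolding M_def by (rule cos_bound[OF r0])
  have s: "cmod (sin (\<nu> * of_real r)) * (cmod w)^2 \<le> M * (cmod \<nu> * 2)"
  proof -
    have "cmod (sin (\<nu> * of_real r)) * (cmod w)^2 \<le> M * (cmod \<nu> * r) * (cmod w)^2"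
      unfolding M_def by (intro mult_right_mono sin_bound r0) auto
    also have "\<dots> = M * cmod \<nu> * (r * (cmod w)^2)" by simp
    also have "\<dots> \<le> M * cmod \<nu> * 2" using rm unfolding M_def by (intro mult_left_mono) auto
    finally show ?thesis by simp
  qed
  have "cmod (Yfun \<nu> w) * cmod w = cmod (cos (\<nu> * of_real r) + sin (\<nu> * of_real r) * of_real ((cmod w)^2)) / cmod K"
  proof -
    have eq: "Yfun \<nu> w = (cos (\<nu> * of_real r) + sin (\<nu> * of_real r) * of_real ((cmod w)^2)) / (w * K)"
      unfolding Yfun_def r_def[symmetric] K_def[symmetric] using w Kp
      by (simp add: add_divide_distrib mult.commute)
    show ?thesis unfolding eq norm_divide norm_mult using w by simp
  qed
  also have "\<dots> \<le> (cmod (cos (\<nu> * of_real r)) + cmod (sin (\<nu> * of_real r)) * (cmod w)^2) / cmod K"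
  proof -
    have "cmod (cos (\<nu> * of_real r) + sin (\<nu> * of_real r) * of_real ((cmod w)^2))
       \<le> cmod (cos (\<nu> * of_real r)) + cmod (sin (\<nu> * of_real r) * of_real ((cmod w)^2))"
      by (rule norm_triangle_ineq)
    also have "\<dots> = cmod (cos (\<nu> * of_real r)) + cmod (sin (\<nu> * of_real r)) * (cmod w)^2"
      by (simp add: norm_mult norm_power)
    finally show ?thesis using Kp by (intro divide_right_mono) auto
  qed
  also have "\<dots> \<le> BY \<nu>" unfolding BY_def K_def[symmetric] M_def[symmetric]
    using c s Kp by (intro divide_right_mono) auto
  finally show ?thesis .
qed

definition hdom :: "complex \<Rightarrow> real" where
  "hdom w = inverse (1 + (Re w)^2) * inverse (1 + (Im w)^2)"

lemma integrable_inv1: "integrable lborel (\<lambda>x::real. inverse (1 + x^2))"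
  using integrable_inverse_1_plus_square unfolding set_integrable_def by simp

lemma integrable_hdom: "integrable lborel hdom"
proof (rule integrableI_bounded)
  show "hdom \<in> borel_measurable lborel" unfolding hdom_def by measurable
  define f where "f = (\<lambda>x::real. ennreal (inverse (1 + x^2)))"
  have fin: "(\<integral>\<^sup>+x. f x \<partial>lborel) < \<infinity>"
    using integrableD(2)[OF integrable_inv1] unfolding f_def
    by (simp add: abs_of_pos add_pos_nonneg top.not_eq_extremum)
  have "(\<integral>\<^sup>+w. ennreal (norm (hdom w)) \<partial>lborel) = (\<integral>\<^sup>+w. (\<Prod>b\<in>Basis. (\<lambda>_. f) b ((w::complex) \<bullet> b)) \<partial>lborel)"
  proof -
    have "ennreal (norm (hdom w)) = (\<Prod>b\<in>(Basis::complex set). f (w \<bullet> b))" for w :: complex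
    proof -
      have "(\<Prod>b\<in>(Basis::complex set). f (w \<bullet> b)) = f (Re w) * f (Im w)"
        by (simp add: Basis_complex_def inner_complex_def)
      then show ?thesis
        unfolding hdom_def f_def
        by (simp add: abs_mult ennreal_mult' abs_of_pos add_pos_nonneg)
    qed
    then show ?thesis by simp
  qed
  also have "\<dots> = (\<Prod>b\<in>(Basis::complex set). (\<integral>\<^sup>+x. f x \<partial>lborel))"
    by (rule nn_integral_lborel_prod) (auto simp: f_def)
  also have "\<dots> = (\<integral>\<^sup>+x. f x \<partial>lborel) * (\<integral>\<^sup>+x. f x \<partial>lborel)"
    by (simp add: Basis_complex_def)
  also have "\<dots> < \<infinity>" using fin by (simp add: ennreal_mult_less_top)
  finally show "(\<integral>\<^sup>+w. ennreal (norm (hdom w)) \<partial>lborel) < \<infinity>" .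
qed

lemma meas_cos[measurable]: "(cos :: complex \<Rightarrow> complex) \<in> borel_measurable borel"
  by (intro borel_measurable_continuous_onI continuous_intros)
lemma meas_sin[measurable]: "(sin :: complex \<Rightarrow> complex) \<in> borel_measurable borel"
  by (intro borel_measurable_continuous_onI continuous_intros)
lemma meas_arctan[measurable]: "(arctan :: real \<Rightarrow> real) \<in> borel_measurable borel"
  by (intro borel_measurable_continuous_onI continuous_intros)

lemma meas_rcoord[measurable]: "rcoord \<in> borel_measurable borel"
  unfolding rcoord_def[abs_def] by measurable

lemma meas_integrand: "(\<lambda>w. (cmod (Yfun \<nu> w))^2 * area_density w) \<in> borel_measurable lborel"
  unfolding Yfun_def area_density_def by measurable

lemma aux1: fixes a b :: real assumes "0 \<le> a" "0 \<le> b"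
  shows "(1 + a) * (1 + b) \<le> 2 * (1 + (a + b)^2)"
proof -
  have "a * b \<le> (a + b)^2" using assms by (simp add: power2_eq_square algebra_simps)
  moreover have "a + b \<le> 1 + (a + b)^2"
  proof -
    have "0 \<le> (a + b - 1)^2" by simp
    then have "2 * (a + b) \<le> 1 + (a + b)^2" by (simp add: power2_eq_square algebra_simps)
    then show ?thesis using assms by (smt (verit))
  qed
  ultimately show ?thesis by (simp add: algebra_simps)
qed
lemma aux2: fixes c :: real assumes "0 \<le> c" shows "1 + c \<le> (1 + c)^2"
  using assms by (simp add: power2_eq_square algebra_simps)
lemma dom_ineq:
  fixes x y :: real
  shows "16 / (1 + (x^2 + y^2)^2)^2 \<le> 32 * (inverse (1 + x^2) * inverse (1 + y^2))"
proof -
  have p: "(1 + x^2) * (1 + y^2) \<le> 2 * (1 + (x^2 + y^2)^2)" by (rule aux1) auto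
  have q: "1 + (x^2 + y^2)^2 \<le> (1 + (x^2 + y^2)^2)^2" by (rule aux2) auto
  have pos: "0 < (1 + x^2) * (1 + y^2)" by (simp add: add_pos_nonneg)
  have pos2: "0 < 1 + (x^2 + y^2)^2" by (simp add: add_pos_nonneg)
  have "16 / (1 + (x^2 + y^2)^2)^2 \<le> 16 / (1 + (x^2 + y^2)^2)"
    using q pos2 by (intro divide_left_mono) auto
  also have "\<dots> \<le> 32 / ((1 + x^2) * (1 + y^2))"
    using p pos pos2 by (simp add: divide_simps)
  finally show ?thesis by (simp add: field_simps)
qed

lemma integrable_part:
  fixes \<nu> :: complex
  assumes K: "cos (\<nu> * of_real pi) \<noteq> 0"
  shows "integrable lborel (\<lambda>w. (cmod (Yfun \<nu> w))^2 * area_density w)"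
proof (rule Bochner_Integration.integrable_bound[OF _ meas_integrand])
  show "integrable lborel (\<lambda>w. (32 * (BY \<nu>)^2) * hdom w)"
    using integrable_hdom by simp
  show "AE w in lborel. norm ((cmod (Yfun \<nu> w))^2 * area_density w) \<le> norm ((32 * (BY \<nu>)^2) * hdom w)"
  proof (rule AE_I2)
    fix w :: complex
    have hpos: "0 \<le> hdom w" unfolding hdom_def by (simp add: add_pos_nonneg less_imp_le)
    have adpos: "0 \<le> area_density w" unfolding area_density_def by simp
    show "norm ((cmod (Yfun \<nu> w))^2 * area_density w) \<le> norm ((32 * (BY \<nu>)^2) * hdom w)"
    proof (cases "w = 0")
      case True
      then show ?thesis unfolding Yfun_def using hpos by simp
    next
      case w: False
      define \<rho> where "\<rho> = (cmod w)^2"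
      have rho: "\<rho> = (Re w)^2 + (Im w)^2" unfolding \<rho>_def by (simp add: cmod_power2)
      have ad: "area_density w = 16 * \<rho> / (1 + \<rho>^2)^2"
        unfolding area_density_def \<rho>_def by (simp add: norm_mult norm_power power_mult_distrib)
      have yb: "(cmod (Yfun \<nu> w))^2 * \<rho> \<le> (BY \<nu>)^2"
      proof -
        have "(cmod (Yfun \<nu> w) * cmod w)^2 \<le> (BY \<nu>)^2"
          using Y_bound[OF K w] by (intro power_mono) auto
        then show ?thesis unfolding \<rho>_def by (simp add: power_mult_distrib)
      qed
      have "(cmod (Yfun \<nu> w))^2 * area_density w = ((cmod (Yfun \<nu> w))^2 * \<rho>) * (16 / (1 + \<rho>^2)^2)"
        unfolding ad by simp
      also have "\<dots> \<le> (BY \<nu>)^2 * (16 / (1 + \<rho>^2)^2)"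
        using yb by (intro mult_right_mono) auto
      also have "\<dots> \<le> (BY \<nu>)^2 * (32 * hdom w)"
        unfolding rho hdom_def by (intro mult_left_mono dom_ineq) auto
      finally show ?thesis using hpos adpos by simp
    qed
  qed
qed



lemma arctan_lower: assumes "0 \<le> x" shows "x - x^3 \<le> arctan x"
proof -
  have "(\<lambda>t. arctan t - t + t^3) 0 \<le> (\<lambda>t. arctan t - t + t^3) x"
  proof (rule DERIV_nonneg_imp_nondecreasing[OF assms])
    fix t :: real assume t: "0 \<le> t" "t \<le> x"
    have "DERIV (\<lambda>t. arctan t - t + t^3) t :> (1 / (1 + t^2) - 1 + 3 * t^2)"
      by (auto intro!: derivative_eq_intros simp: field_simps)
    moreover have "0 \<le> 1 / (1 + t^2) - 1 + 3 * t^2"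
    proof -
      have p: "0 < 1 + t^2" by (simp add: add_pos_nonneg)
      have "1 - (1 + t^2) + 3 * t^2 * (1 + t^2) \<ge> 0" by (simp add: algebra_simps)
      then have "(1 - (1 + t^2) + 3 * t^2 * (1 + t^2)) / (1 + t^2) \<ge> 0" using p by simp
      moreover have "(1 - (1 + t^2) + 3 * t^2 * (1 + t^2)) / (1 + t^2) = 1 / (1 + t^2) - 1 + 3 * t^2"
        using p by (simp add: field_simps)
      ultimately show ?thesis by simp
    qed
    ultimately show "\<exists>y. DERIV (\<lambda>t. arctan t - t + t^3) t :> y \<and> y \<ge> 0" by blast
  qed
  then show ?thesis by simp
qed

lemma rcoord_small:
  assumes "w \<noteq> 0"
  shows "rcoord w = pi - 2 * arctan ((cmod w)^2)"
proof -
  have p: "(cmod w)^2 > 0" using assms by simp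
  show ?thesis unfolding rcoord_def using assms Transcendental.arctan_inverse[of "(cmod w)^2"] p
    by (simp add: sgn_if)
qed

lemma cnj_eq: "w \<noteq> 0 \<Longrightarrow> cnj w = of_real ((cmod w)^2) / w"
  using complex_norm_square[of w] by (simp add: field_simps)

lemma taylor_bounds:
  fixes z :: complex
  assumes "cmod z \<le> R"
  shows "cmod (cos z - 1) \<le> exp R * (cmod z)^2"
    and "cmod (sin z - z) \<le> exp R * (cmod z)^3 / 2"
    and "cmod (sin z) \<le> exp R * cmod z"
proof -
  have im: "exp \<bar>Im z\<bar> \<le> exp R" using abs_Im_le_cmod[of z] assms by simp
  have "cmod (cos z - 1) \<le> exp \<bar>Im z\<bar> * (cmod z)^2"
    using Taylor_cos[of z 1] by (simp add: cos_coeff_def power2_eq_square)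
  also have "\<dots> \<le> exp R * (cmod z)^2" using im by (intro mult_right_mono) auto
  finally show "cmod (cos z - 1) \<le> exp R * (cmod z)^2" .
  have "cmod (sin z - z) \<le> exp \<bar>Im z\<bar> * (cmod z)^3 / 2"
    using Taylor_sin[of z 2] by (simp add: sin_coeff_def numeral_2_eq_2 eval_nat_numeral)
  also have "\<dots> \<le> exp R * (cmod z)^3 / 2" using im by (intro divide_right_mono mult_right_mono) auto
  finally show "cmod (sin z - z) \<le> exp R * (cmod z)^3 / 2" .
  have "cmod (sin z) \<le> exp \<bar>Im z\<bar> * cmod z"
    using Taylor_sin[of z 0] by (simp add: sin_coeff_def)
  also have "\<dots> \<le> exp R * cmod z" using im by (intro mult_right_mono) auto
  finally show "cmod (sin z) \<le> exp R * cmod z" .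
qed

lemma Y_identity:
  fixes \<nu> w :: complex
  assumes w: "w \<noteq> 0" and K: "cos (\<nu> * of_real pi) \<noteq> 0"
  defines "\<rho> \<equiv> (cmod w)^2"
  defines "z \<equiv> \<nu> * of_real (2 * arctan \<rho>)"
  defines "K' \<equiv> cos (\<nu> * of_real pi)"
  defines "S \<equiv> sin (\<nu> * of_real pi)"
  shows "Yfun \<nu> w - (1 / w + (1 + 2 * \<nu>) * tan (\<nu> * of_real pi) * cnj w)
    = (K' * (cos z - 1) + S * (sin z - z) + S * (z - 2 * \<nu> * of_real \<rho>)
       + of_real \<rho> * (S * (cos z - 1) - K' * sin z)) / (w * K')"
proof -
  have rc: "\<nu> * of_real (rcoord w) = \<nu> * of_real pi - z"
    unfolding rcoord_small[OF w] z_def \<rho>_def by (simp add: algebra_simps)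
  have c: "cos (\<nu> * of_real (rcoord w)) = K' * cos z + S * sin z"
    unfolding rc K'_def S_def by (rule cos_diff)
  have s: "sin (\<nu> * of_real (rcoord w)) = S * cos z - K' * sin z"
    unfolding rc K'_def S_def by (rule sin_diff)
  have K0: "K' \<noteq> 0" using K unfolding K'_def .
  show ?thesis
    unfolding Yfun_def c s cnj_eq[OF w] tan_def K'_def[symmetric] S_def[symmetric] \<rho>_def[symmetric]
    using w K0 by (simp add: field_simps)
qed

definition Cb :: "complex \<Rightarrow> real" where
  "Cb \<nu> = (let n = cmod \<nu>; E0 = exp (n * pi); Ka = cmod (cos (\<nu> * of_real pi)); Sa = cmod (sin (\<nu> * of_real pi)) in
     4*Ka*E0*n^2 + 4*Sa*E0*n^3 + 2*Sa*n + 4*Sa*E0*n^2 + 2*Ka*E0*n)"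

lemma asym_bound:
  fixes \<nu> w :: complex
  assumes K: "cos (\<nu> * of_real pi) \<noteq> 0" and w0: "0 < cmod w" and w1: "cmod w < 1"
  shows "cmod (Yfun \<nu> w - (1 / w + (1 + 2 * \<nu>) * tan (\<nu> * of_real pi) * cnj w))
     \<le> Cb \<nu> / cmod (cos (\<nu> * of_real pi)) * cmod w ^ 3"
proof -
  have w: "w \<noteq> 0" using w0 by auto
  define \<rho> where "\<rho> = (cmod w)^2"
  define d where "d = 2 * arctan \<rho>"
  define z where "z = \<nu> * of_real d"
  define K' where "K' = cos (\<nu> * of_real pi)"
  define S where "S = sin (\<nu> * of_real pi)"
  define n where "n = cmod \<nu>"
  define E0 where "E0 = exp (n * pi)"
  define Ka where "Ka = cmod K'"
  define Sa where "Sa = cmod S"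
  have n0: "0 \<le> n" unfolding n_def by simp
  have E0: "0 \<le> E0" unfolding E0_def by simp
  have Ka: "0 < Ka" unfolding Ka_def K'_def using K by simp
  have Sa: "0 \<le> Sa" unfolding Sa_def by simp
  have r0: "0 < \<rho>" unfolding \<rho>_def using w0 by simp
  have r1: "\<rho> < 1" unfolding \<rho>_def using w0 w1 by (simp add: power_less_one_iff abs_less_iff)
  have d0: "0 \<le> d" unfolding d_def using r0 by simp
  have d1: "d \<le> 2 * \<rho>" unfolding d_def using arctan_le_self[of \<rho>] r0 by simp
  have d2: "2 * \<rho> - d \<le> 2 * \<rho>^3" unfolding d_def using arctan_lower[of \<rho>] r0 by simp
  have d3: "d \<le> pi" unfolding d_def using arctan_ubound[of \<rho>] by simp
  have rr: "\<rho>^3 \<le> \<rho>^2" using r0 r1 by (simp add: power_decreasing)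
  have zn: "cmod z = n * d" unfolding z_def n_def using d0 by (simp add: norm_mult)
  have z1: "cmod z \<le> n * (2 * \<rho>)" unfolding zn using d1 n0 by (intro mult_left_mono) auto
  have z2: "cmod z \<le> n * pi" unfolding zn using d3 n0 by (intro mult_left_mono) auto
  have zpos: "0 \<le> cmod z" by simp
  have t1: "cmod (cos z - 1) \<le> 4 * E0 * n^2 * \<rho>^2"
  proof -
    have "cmod (cos z - 1) \<le> E0 * (cmod z)^2" unfolding E0_def by (rule taylor_bounds(1)[OF z2])
    also have "\<dots> \<le> E0 * (n * (2 * \<rho>))^2" using z1 E0 by (intro mult_left_mono power_mono) auto
    finally show ?thesis by (simp add: power_mult_distrib algebra_simps)
  qed
  have t2: "cmod (sin z - z) \<le> 4 * E0 * n^3 * \<rho>^2"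
  proof -
    have "cmod (sin z - z) \<le> E0 * (cmod z)^3 / 2" unfolding E0_def by (rule taylor_bounds(2)[OF z2])
    also have "\<dots> \<le> E0 * (n * (2 * \<rho>))^3 / 2" using z1 E0 by (intro divide_right_mono mult_left_mono power_mono) auto
    also have "\<dots> = 4 * E0 * n^3 * \<rho>^3" by (simp add: power_mult_distrib algebra_simps)
    also have "\<dots> \<le> 4 * E0 * n^3 * \<rho>^2" using rr E0 n0 by (intro mult_left_mono) auto
    finally show ?thesis .
  qed
  have t3: "cmod (z - 2 * \<nu> * of_real \<rho>) \<le> 2 * n * \<rho>^2"
  proof -
    have "z - 2 * \<nu> * of_real \<rho> = \<nu> * of_real (d - 2 * \<rho>)" unfolding z_def by (simp add: algebra_simps)
    then have "cmod (z - 2 * \<nu> * of_real \<rho>) = n * (2 * \<rho> - d)" unfolding n_def using d1 by (simp only: norm_mult norm_of_real) simp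
    also have "\<dots> \<le> n * (2 * \<rho>^2)" using d2 rr n0 by (intro mult_left_mono) auto
    finally show ?thesis by simp
  qed
  have t4: "cmod (sin z) \<le> 2 * E0 * n * \<rho>"
  proof -
    have "cmod (sin z) \<le> E0 * cmod z" unfolding E0_def by (rule taylor_bounds(3)[OF z2])
    also have "\<dots> \<le> E0 * (n * (2 * \<rho>))" using z1 E0 by (intro mult_left_mono) auto
    finally show ?thesis by (simp add: algebra_simps)
  qed
  define Br where "Br = K' * (cos z - 1) + S * (sin z - z) + S * (z - 2 * \<nu> * of_real \<rho>)
       + of_real \<rho> * (S * (cos z - 1) - K' * sin z)"
  have "cmod Br \<le> Ka * cmod (cos z - 1) + Sa * cmod (sin z - z) + Sa * cmod (z - 2 * \<nu> * of_real \<rho>)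
       + \<rho> * (Sa * cmod (cos z - 1) + Ka * cmod (sin z))"
    unfolding Br_def Ka_def Sa_def using r0
    by (intro order_trans[OF norm_triangle_ineq] add_mono order_trans[OF norm_triangle_ineq4])
       (auto simp: norm_mult intro!: order_trans[OF norm_triangle_ineq4] mult_left_mono)
  also have "\<dots> \<le> Ka * (4 * E0 * n^2 * \<rho>^2) + Sa * (4 * E0 * n^3 * \<rho>^2) + Sa * (2 * n * \<rho>^2)
       + \<rho> * (Sa * (4 * E0 * n^2 * \<rho>^2) + Ka * (2 * E0 * n * \<rho>))"
    using t1 t2 t3 t4 Ka Sa r0 by (intro add_mono mult_left_mono) auto
  also have "\<dots> \<le> Ka * (4 * E0 * n^2 * \<rho>^2) + Sa * (4 * E0 * n^3 * \<rho>^2) + Sa * (2 * n * \<rho>^2)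
       + (Sa * (4 * E0 * n^2 * \<rho>^2) + Ka * (2 * E0 * n * \<rho>^2))"
  proof -
    have "\<rho> * (Sa * (4 * E0 * n^2 * \<rho>^2)) \<le> Sa * (4 * E0 * n^2 * \<rho>^2)"
      using r0 r1 Sa E0 n0 by (intro mult_left_le_one_le) auto
    moreover have "\<rho> * (Ka * (2 * E0 * n * \<rho>)) = Ka * (2 * E0 * n * \<rho>^2)"
      by (simp add: power2_eq_square algebra_simps)
    moreover have "\<rho> * (Sa * (4 * E0 * n^2 * \<rho>^2) + Ka * (2 * E0 * n * \<rho>))
       = \<rho> * (Sa * (4 * E0 * n^2 * \<rho>^2)) + \<rho> * (Ka * (2 * E0 * n * \<rho>))" by (rule distrib_left)
    ultimately show ?thesis by linarith
  qed
  also have "\<dots> = Cb \<nu> * \<rho>^2"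
    unfolding Cb_def Let_def n_def[symmetric] E0_def[symmetric] K'_def[symmetric] S_def[symmetric]
      Ka_def[symmetric] Sa_def[symmetric] by (simp add: algebra_simps)
  finally have BrB: "cmod Br \<le> Cb \<nu> * \<rho>^2" .
  have "Yfun \<nu> w - (1 / w + (1 + 2 * \<nu>) * tan (\<nu> * of_real pi) * cnj w) = Br / (w * K')"
    unfolding Br_def z_def d_def \<rho>_def K'_def S_def by (rule Y_identity[OF w K])
  then have "cmod (Yfun \<nu> w - (1 / w + (1 + 2 * \<nu>) * tan (\<nu> * of_real pi) * cnj w)) = cmod Br / (cmod w * Ka)"
    unfolding Ka_def by (simp add: norm_divide norm_mult)
  also have "\<dots> \<le> Cb \<nu> * \<rho>^2 / (cmod w * Ka)" using BrB w0 Ka by (intro divide_right_mono) auto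
  also have "\<dots> = Cb \<nu> / Ka * cmod w ^ 3" unfolding \<rho>_def using w0 Ka
    by (simp add: field_simps power2_eq_square power3_eq_cube power4_eq_xxxx)
  finally show ?thesis unfolding Ka_def K'_def .
qed


lemma Cb_nonneg: "0 \<le> Cb \<nu>"
  unfolding Cb_def Let_def by (intro add_nonneg_nonneg mult_nonneg_nonneg) auto

theorem mainTheorem10:
  fixes \<nu> lam :: complex
  assumes "lam = \<nu> * (\<nu> + 1)"
    and "cos (\<nu> * of_real pi) \<noteq> 0"
  shows "integrable lborel (\<lambda>w. (cmod (Yfun \<nu> w))^2 * area_density w) \<and>
         (\<forall>r\<in>{0<..<pi}. \<forall>\<phi>. polar_C2_at (Ypolar \<nu>) r \<phi> \<and>
           Lap_star (Ypolar \<nu>) r \<phi> - lam * Ypolar \<nu> r \<phi> = 0) \<and>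
         (\<exists>M R. \<forall>w. R < cmod w \<longrightarrow> cmod (Yfun \<nu> w) \<le> M) \<and>
         (\<forall>\<epsilon>>0. \<exists>C \<delta>. \<delta> > 0 \<and> (\<forall>w. 0 < cmod w \<and> cmod w < \<delta> \<longrightarrow>
           cmod (Yfun \<nu> w - (1 / w + 0 + (1 + 2 * \<nu>) * tan (\<nu> * of_real pi) * cnj w + 0 * w))
             \<le> C * cmod w powr (2 - \<epsilon>)))"
proof (intro conjI)
  note K = assms(2)
  show "integrable lborel (\<lambda>w. (cmod (Yfun \<nu> w))^2 * area_density w)"
    by (rule integrable_part[OF K])
  show "\<forall>r\<in>{0<..<pi}. \<forall>\<phi>. polar_C2_at (Ypolar \<nu>) r \<phi> \<and>
           Lap_star (Ypolar \<nu>) r \<phi> - lam * Ypolar \<nu> r \<phi> = 0"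
    using pde assms(1) by blast
  show "\<exists>M R. \<forall>w. R < cmod w \<longrightarrow> cmod (Yfun \<nu> w) \<le> M"
  proof (intro exI allI impI)
    fix w :: complex assume w: "1 < cmod w"
    then have w0: "w \<noteq> 0" by auto
    have "cmod (Yfun \<nu> w) \<le> cmod (Yfun \<nu> w) * cmod w"
      using w by (intro mult_le_cancel_left1[THEN iffD2] order.strict_implies_order) (auto simp: mult_le_cancel_left1)
    also have "\<dots> \<le> BY \<nu>" by (rule Y_bound[OF K w0])
    finally show "cmod (Yfun \<nu> w) \<le> BY \<nu>" .
  qed
  show "\<forall>\<epsilon>>0. \<exists>C \<delta>. \<delta> > 0 \<and> (\<forall>w. 0 < cmod w \<and> cmod w < \<delta> \<longrightarrow>
           cmod (Yfun \<nu> w - (1 / w + 0 + (1 + 2 * \<nu>) * tan (\<nu> * of_real pi) * cnj w + 0 * w))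
             \<le> C * cmod w powr (2 - \<epsilon>))"
  proof (intro allI impI exI conjI)
    fix \<epsilon> :: real assume e: "\<epsilon> > 0"
    show "(0::real) < 1" by simp
    fix w :: complex assume w: "0 < cmod w \<and> cmod w < 1"
    have C0: "0 \<le> Cb \<nu> / cmod (cos (\<nu> * of_real pi))" using Cb_nonneg by simp
    have "cmod (Yfun \<nu> w - (1 / w + 0 + (1 + 2 * \<nu>) * tan (\<nu> * of_real pi) * cnj w + 0 * w))
       \<le> Cb \<nu> / cmod (cos (\<nu> * of_real pi)) * cmod w ^ 3"
      using asym_bound[OF K, of w] w by simp
    also have "cmod w ^ 3 = cmod w powr 3" using w by (simp add: powr_realpow)
    also have "Cb \<nu> / cmod (cos (\<nu> * of_real pi)) * cmod w powr 3
        \<le> Cb \<nu> / cmod (cos (\<nu> * of_real pi)) * cmod w powr (2 - \<epsilon>)"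
      using w e C0 by (intro mult_left_mono powr_mono') auto
    finally show "cmod (Yfun \<nu> w - (1 / w + 0 + (1 + 2 * \<nu>) * tan (\<nu> * of_real pi) * cnj w + 0 * w))
       \<le> Cb \<nu> / cmod (cos (\<nu> * of_real pi)) * cmod w powr (2 - \<epsilon>)" .
  qed
qed

end
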